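(* Let $(X_k)_{k\in\mathbb N}$ be Banach spaces such that infinitely many of the $X_k$ are infinite dimensional. Then $(\bigoplus_{k=1}^\infty X_k)_{T^*}$ is not asymptotic-$c_0$.
   Context: $T$ is the completion of $c_{00}$ under the norm satisfying $\|x\|_T=\max\{\|x\|_\infty,\frac12\sup\sum_{j=1}^n\|E_j(x)\|_T\}$, supremum over $n$ and finite sets $n\le E_1<\dots<E_n$ (with $E(x)$ the restriction of $x$ to $E$); $T^*$ is its dual with $1$-unconditional basis of coordinate functionals $(e_j)$. $(\bigoplus X_k)_{T^*}$ is the space of $(x_k)$, $x_k\in X_k$, with $\sum\|x_k\|e_k$ convergent in $T^*$, normed by $\|\sum\|x_k\|e_k\|_{T^*}$. Two finite basic sequences are $c$-equivalent if there are $A,B>0$, $AB\le c$, with $\frac1A\|\sum a_ix_i\|\le\|\sum a_iy_i\|\le B\|\sum a_ix_i\|$. $\{X\}_k$ is the set of norms $E$ on $\mathbb R^k$ with unit vector basis normalized monotone such that: for every $\varepsilon>0$, for every closed finite-codimensional $X_1$ there is $x_1\in S_{X_1}$, ..., for every closed finite-codimensional $X_k$ there is $x_k\in S_{X_k}$ with $(x_j)$ $(1+\varepsilon)$-equivalent to $(e_j)$. $X$ is asymptotic-$c_0$ if for some $c$ every $E\in\{X\}_k$, $k\in\mathbb N$, has basis $c$-equivalent to the $\ell_\infty^k$ unit vector basis. *)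

theory Defs
  imports "HOL-Analysis.Analysis" "HOL-Library.Function_Algebras"
begin

instantiation "fun" :: (type, real_vector) real_vector
begin
definition scaleR_fun :: "real \<Rightarrow> ('a \<Rightarrow> 'b) \<Rightarrow> 'a \<Rightarrow> 'b"
  where "scaleR_fun c f = (\<lambda>x. c *\<^sub>R f x)"
instance
  by standard (auto simp: scaleR_fun_def fun_eq_iff scaleR_add_right scaleR_add_left)
end

text \<open>Vectors are indexed by nat starting at 0: position p (0-based) is the
 coordinate e_(p+1) of the paper. Hence the admissibility condition
 n \<le> E_1 (1-based) reads n \<le> Suc (Min E_1) in 0-based positions.\<close>

definition c00 :: "(nat \<Rightarrow> real) \<Rightarrow> bool"
  where "c00 x \<longleftrightarrow> finite {i. x i \<noteq> 0}"

definition restr :: "nat set \<Rightarrow> (nat \<Rightarrow> real) \<Rightarrow> nat \<Rightarrow> real"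
  where "restr E x = (\<lambda>i. if i \<in> E then x i else 0)"

definition admissible :: "nat set list \<Rightarrow> bool"
  where "admissible Es \<longleftrightarrow>
     (\<forall>j < length Es. finite (Es ! j) \<and> Es ! j \<noteq> {}) \<and>
     (\<forall>j. Suc j < length Es \<longrightarrow> Max (Es ! j) < Min (Es ! Suc j)) \<and>
     (length Es > 0 \<longrightarrow> length Es \<le> Suc (Min (Es ! 0)))"

definition sup_norm :: "(nat \<Rightarrow> real) \<Rightarrow> real"
  where "sup_norm x = Sup (range (\<lambda>i. \<bar>x i\<bar>))"

text \<open>Figiel--Johnson iteration; the Tsirelson norm is its (increasing) limit, which is
 the norm on c00 satisfying the implicit equation of the paper.\<close>
fun tsi_iter :: "nat \<Rightarrow> (nat \<Rightarrow> real) \<Rightarrow> real" where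
  "tsi_iter 0 x = sup_norm x"
| "tsi_iter (Suc m) x = max (tsi_iter m x)
     ((1/2) * Sup {(\<Sum>j < length Es. tsi_iter m (restr (Es ! j) x)) | Es. admissible Es})"

definition tsi_norm :: "(nat \<Rightarrow> real) \<Rightarrow> real"
  where "tsi_norm x = Sup (range (\<lambda>m. tsi_iter m x))"

text \<open>Norm in T* of the (formal) series sum b_k e_k: its norm as a functional on T,
 computed on the dense subspace c00.\<close>
definition tstar_norm :: "(nat \<Rightarrow> real) \<Rightarrow> real"
  where "tstar_norm b = Sup {(\<Sum>i \<in> {i. x i \<noteq> 0}. b i * x i) | x. c00 x \<and> tsi_norm x \<le> 1}"

text \<open>Convergence of sum b_k e_k in T* (a Banach space): the partial sums are Cauchy.\<close>
definition tstar_convergent :: "(nat \<Rightarrow> real) \<Rightarrow> bool"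
  where "tstar_convergent b \<longleftrightarrow>
     (\<forall>e>0. \<exists>M. \<forall>m n. M \<le> m \<longrightarrow>
        tstar_norm (\<lambda>i. if m \<le> i \<and> i < n then b i else 0) < e)"

definition tstar_sum :: "(nat \<Rightarrow> 'a::real_normed_vector set) \<Rightarrow> (nat \<Rightarrow> 'a) set"
  where "tstar_sum X = {x. (\<forall>k. x k \<in> X k) \<and> tstar_convergent (\<lambda>k. norm (x k))}"

definition tstar_sum_norm :: "(nat \<Rightarrow> 'a::real_normed_vector) \<Rightarrow> real"
  where "tstar_sum_norm x = tstar_norm (\<lambda>k. norm (x k))"

definition fin_codim_closed :: "'v::real_vector set \<Rightarrow> ('v \<Rightarrow> real) \<Rightarrow> 'v set \<Rightarrow> bool"
  where "fin_codim_closed V N W \<longleftrightarrow>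
     subspace W \<and> W \<subseteq> V \<and>
     (\<forall>s y. (\<forall>n. s n \<in> W) \<longrightarrow> y \<in> V \<longrightarrow> (\<lambda>n. N (s n - y)) \<longlonglongrightarrow> 0 \<longrightarrow> y \<in> W) \<and>
     (\<exists>F. finite F \<and> F \<subseteq> V \<and> V \<subseteq> {w + f | w f. w \<in> W \<and> f \<in> span F})"

text \<open>E is a norm on R^k (vectors a :: nat => real, only a 0..a (k-1) matter) whose
 unit vector basis is normalized and monotone.\<close>
definition nm_norm :: "nat \<Rightarrow> ((nat \<Rightarrow> real) \<Rightarrow> real) \<Rightarrow> bool"
  where "nm_norm k E \<longleftrightarrow>
     (\<forall>a. E a = E (\<lambda>i. if i < k then a i else 0)) \<and>
     (\<forall>a. E a = 0 \<longleftrightarrow> (\<forall>i<k. a i = 0)) \<and>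
     (\<forall>a b. E (\<lambda>i. a i + b i) \<le> E a + E b) \<and>
     (\<forall>c a. E (\<lambda>i. c * a i) = \<bar>c\<bar> * E a) \<and>
     (\<forall>i<k. E (\<lambda>j. if j = i then 1 else 0) = 1) \<and>
     (\<forall>a m. m \<le> k \<longrightarrow> E (\<lambda>i. if i < m then a i else 0) \<le> E a)"

definition equiv_to_basis :: "('v::real_vector \<Rightarrow> real) \<Rightarrow> ((nat \<Rightarrow> real) \<Rightarrow> real) \<Rightarrow> real \<Rightarrow> 'v list \<Rightarrow> bool"
  where "equiv_to_basis N E c xs \<longleftrightarrow>
     (\<exists>A B. A > 0 \<and> B > 0 \<and> A * B \<le> c \<and>
        (\<forall>a. (1/A) * N (\<Sum>j < length xs. a j *\<^sub>R xs ! j) \<le> E a \<and>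
             E a \<le> B * N (\<Sum>j < length xs. a j *\<^sub>R xs ! j)))"

fun asym_game :: "'v::real_vector set \<Rightarrow> ('v \<Rightarrow> real) \<Rightarrow> ((nat \<Rightarrow> real) \<Rightarrow> real) \<Rightarrow> real
     \<Rightarrow> nat \<Rightarrow> 'v list \<Rightarrow> bool" where
  "asym_game V N E \<epsilon> 0 xs = equiv_to_basis N E (1 + \<epsilon>) xs"
| "asym_game V N E \<epsilon> (Suc m) xs =
     (\<forall>W. fin_codim_closed V N W \<longrightarrow>
        (\<exists>x \<in> W. N x = 1 \<and> asym_game V N E \<epsilon> m (xs @ [x])))"

definition asym_struct :: "'v::real_vector set \<Rightarrow> ('v \<Rightarrow> real) \<Rightarrow> nat \<Rightarrow> ((nat \<Rightarrow> real) \<Rightarrow> real) set"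
  where "asym_struct V N k = {E. nm_norm k E \<and> (\<forall>\<epsilon>>0. asym_game V N E \<epsilon> k [])}"

definition linf_norm :: "nat \<Rightarrow> (nat \<Rightarrow> real) \<Rightarrow> real"
  where "linf_norm k a = Max (insert 0 ((\<lambda>i. \<bar>a i\<bar>) ` {..<k}))"

definition asymptotic_c0 :: "'v::real_vector set \<Rightarrow> ('v \<Rightarrow> real) \<Rightarrow> bool"
  where "asymptotic_c0 V N \<longleftrightarrow>
     (\<exists>c. \<forall>k. \<forall>E \<in> asym_struct V N k.
        (\<exists>A B. A > 0 \<and> B > 0 \<and> A * B \<le> c \<and>
           (\<forall>a. (1/A) * E a \<le> linf_norm k a \<and> linf_norm k a \<le> B * E a)))"

definition infinite_dimensional :: "'a::real_vector set \<Rightarrow> bool"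
  where "infinite_dimensional S \<longleftrightarrow> \<not> (\<exists>B. finite B \<and> B \<subseteq> S \<and> S \<subseteq> span B)"

end

theory Submission
  imports Defs
begin


definition supp :: "(nat \<Rightarrow> real) \<Rightarrow> nat set" where "supp x = {i. x i \<noteq> 0}"
definition l1 :: "(nat \<Rightarrow> real) \<Rightarrow> real" where "l1 x = (\<Sum>i\<in>supp x. \<bar>x i\<bar>)"

lemma c00_supp: "c00 x \<longleftrightarrow> finite (supp x)" by (simp add: c00_def supp_def)

lemma restr_restr: "restr E (restr S x) = restr (E \<inter> S) x"
  by (auto simp: restr_def)

lemma supp_restr: "supp (restr E x) = supp x \<inter> E"
  by (auto simp: restr_def supp_def)

lemma c00_restr: "c00 x \<Longrightarrow> c00 (restr E x)"
  by (simp add: c00_supp supp_restr)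

lemma l1_superset: "finite D \<Longrightarrow> supp x \<subseteq> D \<Longrightarrow> l1 x = (\<Sum>i\<in>D. \<bar>x i\<bar>)"
  unfolding l1_def by (rule sum.mono_neutral_left) (auto simp: supp_def)

lemma l1_nonneg: "l1 x \<ge> 0" by (simp add: l1_def sum_nonneg)

lemma l1_restr: "l1 (restr E x) = (\<Sum>i\<in>supp x \<inter> E. \<bar>x i\<bar>)"
  unfolding l1_def supp_restr by (rule sum.cong) (auto simp: restr_def)

lemma sup_norm_bdd: "c00 x \<Longrightarrow> bdd_above (range (\<lambda>i. \<bar>x i\<bar>))"
proof -
  assume "c00 x"
  then have "range (\<lambda>i. \<bar>x i\<bar>) \<subseteq> insert 0 ((\<lambda>i. \<bar>x i\<bar>) ` supp x)"
    by (auto simp: supp_def)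
  moreover have "finite (insert 0 ((\<lambda>i. \<bar>x i\<bar>) ` supp x))" using \<open>c00 x\<close> by (simp add: c00_supp)
  ultimately show ?thesis by (meson bdd_above_finite bdd_above_mono)
qed

lemma sup_norm_ge: "c00 x \<Longrightarrow> \<bar>x i\<bar> \<le> sup_norm x"
  unfolding sup_norm_def by (rule cSUP_upper[OF _ sup_norm_bdd]) auto

lemma sup_norm_le: "(\<And>i. \<bar>x i\<bar> \<le> B) \<Longrightarrow> sup_norm x \<le> B"
  unfolding sup_norm_def by (rule cSUP_least) auto

lemma sup_norm_nonneg: "c00 x \<Longrightarrow> 0 \<le> sup_norm x"
  using sup_norm_ge[of x 0] by linarith

lemma abs_le_l1: "c00 x \<Longrightarrow> \<bar>x i\<bar> \<le> l1 x"
proof (cases "i \<in> supp x")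
  case True
  assume "c00 x"
  then show ?thesis unfolding l1_def
    by (intro member_le_sum) (auto simp: c00_supp True)
next
  case False then show ?thesis by (simp add: supp_def l1_nonneg)
qed

lemma sup_norm_le_l1: "c00 x \<Longrightarrow> sup_norm x \<le> l1 x"
  by (rule sup_norm_le) (rule abs_le_l1)

lemma adm_chain:
  assumes "admissible Es" "i < j" "j < length Es"
  shows "Max (Es ! i) < Min (Es ! j)"
  using assms(2,3)
proof (induction j)
  case 0 then show ?case by simp
next
  case (Suc j)
  have ch: "Max (Es ! j) < Min (Es ! Suc j)" using assms(1) Suc.prems unfolding admissible_def by auto
  have fin: "finite (Es ! j)" "Es ! j \<noteq> {}" using assms(1) Suc.prems unfolding admissible_def by auto
  have "Min (Es ! j) \<le> Max (Es ! j)" using fin by simp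
  show ?case
  proof (cases "i = j")
    case True then show ?thesis using ch by simp
  next
    case False
    then have "Max (Es ! i) < Min (Es ! j)" using Suc by auto
    then show ?thesis using ch \<open>Min (Es ! j) \<le> Max (Es ! j)\<close> by linarith
  qed
qed

lemma adm_disj:
  assumes "admissible Es" "i < length Es" "j < length Es" "i \<noteq> j"
  shows "Es ! i \<inter> Es ! j = {}"
proof -
  have fin: "\<And>k. k < length Es \<Longrightarrow> finite (Es ! k) \<and> Es ! k \<noteq> {}" using assms(1) unfolding admissible_def by auto
  { fix a b assume ab: "a < b" "b < length Es"
    then have "Max (Es ! a) < Min (Es ! b)" using adm_chain assms(1) by blast
    have fa: "finite (Es ! a)" "finite (Es ! b)" using fin[of a] fin[of b] ab by auto
    have "Es ! a \<inter> Es ! b = {}"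
    proof (rule ccontr)
      assume "Es ! a \<inter> Es ! b \<noteq> {}"
      then obtain z where z: "z \<in> Es ! a" "z \<in> Es ! b" by blast
      have "z \<le> Max (Es ! a)" using Max_ge[OF fa(1) z(1)] .
      moreover have "Min (Es ! b) \<le> z" using Min_le[OF fa(2) z(2)] .
      ultimately show False using \<open>Max (Es ! a) < Min (Es ! b)\<close> by linarith
    qed }
  note * = this
  show ?thesis
  proof (cases "i < j")
    case True then show ?thesis using *[of i j] assms by simp
  next
    case False then have "j < i" using assms(4) by simp
    then show ?thesis using *[of j i] assms by (simp add: inf_commute)
  qed
qed

lemma adm_ge_min:
  assumes "admissible Es" "j < length Es" "x \<in> Es ! j"
  shows "Min (Es ! 0) \<le> x"
proof (cases j)
  case 0 then show ?thesis using assms unfolding admissible_def by auto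
next
  case (Suc k)
  have fin: "\<And>k. k < length Es \<Longrightarrow> finite (Es ! k) \<and> Es ! k \<noteq> {}" using assms(1) unfolding admissible_def by auto
  have "Max (Es ! 0) < Min (Es ! j)" using adm_chain[OF assms(1), of 0 j] assms Suc by simp
  moreover have "Min (Es ! j) \<le> x" using fin[OF assms(2)] assms(3) by simp
  moreover have l0: "0 < length Es" by (rule le_less_trans[OF le0 assms(2)])
  moreover have f0: "finite (Es ! 0)" "Es ! 0 \<noteq> {}" using fin[OF l0] by auto
  moreover have "Min (Es ! 0) \<le> Max (Es ! 0)" using Max_ge[OF f0(1) Min_in[OF f0]] .
  ultimately show ?thesis by linarith
qed

lemma adm_len:
  assumes "admissible Es" "0 < length Es"
  shows "length Es \<le> Suc (Min (Es ! 0))"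
  using assms unfolding admissible_def by auto

lemma adm_sum_le:
  assumes "admissible Es" "finite A" "\<And>i. f i \<ge> (0::real)"
  shows "(\<Sum>j<length Es. \<Sum>i\<in>A \<inter> Es ! j. f i) \<le> (\<Sum>i\<in>A. f i)"
proof -
  have "(\<Sum>j<length Es. \<Sum>i\<in>A \<inter> Es ! j. f i) = sum f (\<Union>j<length Es. A \<inter> Es ! j)"
    apply (rule sum.UNION_disjoint[symmetric])
    using assms apply auto
    using adm_disj[OF assms(1)] by blast
  also have "\<dots> \<le> sum f A" by (rule sum_mono2) (use assms in auto)
  finally show ?thesis .
qed

lemma adm_nil: "admissible []" by (simp add: admissible_def)



abbreviation Sset :: "nat \<Rightarrow> (nat \<Rightarrow> real) \<Rightarrow> real set" where
  "Sset m x \<equiv> {(\<Sum>j < length Es. tsi_iter m (restr (Es ! j) x)) | Es. admissible Es}"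

lemma tsi_Suc: "tsi_iter (Suc m) x = max (tsi_iter m x) ((1/2) * Sup (Sset m x))"
  by simp

lemma Sset_ne: "0 \<in> Sset m x"
  using adm_nil by force

lemma c00_add: "c00 x \<Longrightarrow> c00 y \<Longrightarrow> c00 (\<lambda>i. x i + y i)"
  unfolding c00_supp supp_def by (rule finite_subset[of _ "{i. x i \<noteq> 0} \<union> {i. y i \<noteq> 0}"]) auto

lemma c00_mult: "c00 x \<Longrightarrow> c00 (\<lambda>i. c * x i)"
  unfolding c00_supp supp_def by (rule finite_subset[of _ "{i. x i \<noteq> 0}"]) auto

lemma c00_abs: "c00 x \<Longrightarrow> c00 (\<lambda>i. \<bar>x i\<bar>)"
  unfolding c00_supp supp_def by simp

lemma c00_zero: "c00 (\<lambda>i. 0)"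
  unfolding c00_def by simp

lemma c00_sum: "finite T \<Longrightarrow> (\<And>t. t \<in> T \<Longrightarrow> c00 (x t)) \<Longrightarrow> c00 (\<lambda>i. \<Sum>t\<in>T. x t i)"
proof (induction T rule: finite_induct)
  case empty then show ?case by (simp add: c00_zero)
next
  case (insert a F)
  then show ?case by (simp add: c00_add)
qed

lemma sum_l1_restr:
  assumes "admissible Es" "c00 x"
  shows "(\<Sum>j<length Es. l1 (restr (Es ! j) x)) \<le> l1 x"
proof -
  have "(\<Sum>j<length Es. l1 (restr (Es ! j) x)) = (\<Sum>j<length Es. \<Sum>i\<in>supp x \<inter> Es ! j. \<bar>x i\<bar>)"
    by (simp only: l1_restr)
  also have "\<dots> \<le> (\<Sum>i\<in>supp x. \<bar>x i\<bar>)"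
    by (rule adm_sum_le) (use assms in \<open>auto simp: c00_supp\<close>)
  finally show ?thesis by (simp add: l1_def)
qed

lemma tsi_le_l1: "c00 x \<Longrightarrow> tsi_iter m x \<le> l1 x"
proof (induction m arbitrary: x)
  case 0 then show ?case by (simp add: sup_norm_le_l1)
next
  case (Suc m)
  have "Sup (Sset m x) \<le> l1 x"
  proof (rule cSup_least)
    show "Sset m x \<noteq> {}" using Sset_ne by blast
  next
    fix s assume "s \<in> Sset m x"
    then obtain Es where Es: "admissible Es" "s = (\<Sum>j < length Es. tsi_iter m (restr (Es ! j) x))" by blast
    have "s \<le> (\<Sum>j<length Es. l1 (restr (Es ! j) x))"
      unfolding Es(2) by (rule sum_mono) (use Suc c00_restr in blast)
    also have "\<dots> \<le> l1 x" by (rule sum_l1_restr[OF Es(1) Suc.prems])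
    finally show "s \<le> l1 x" .
  qed
  then show ?case using Suc l1_nonneg[of x] by simp
qed

lemma tsi_nonneg: "c00 x \<Longrightarrow> 0 \<le> tsi_iter m x"
proof (induction m)
  case 0 then show ?case by (simp add: sup_norm_nonneg)
next
  case (Suc m) then show ?case by simp
qed

lemma tsi_mono_step: "tsi_iter m x \<le> tsi_iter (Suc m) x"
  by simp

lemma tsi_mono: "m \<le> m' \<Longrightarrow> tsi_iter m x \<le> tsi_iter m' x"
  by (induction m' rule: dec_induct) (auto intro: order_trans[OF _ tsi_mono_step])

lemma Sset_bdd: "c00 x \<Longrightarrow> bdd_above (Sset m x)"
proof -
  assume x: "c00 x"
  have "\<forall>s\<in>Sset m x. s \<le> l1 x"
  proof
    fix s assume "s \<in> Sset m x"
    then obtain Es where Es: "admissible Es" "s = (\<Sum>j < length Es. tsi_iter m (restr (Es ! j) x))" by blast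
    have "s \<le> (\<Sum>j<length Es. l1 (restr (Es ! j) x))"
      unfolding Es(2) by (rule sum_mono) (use x tsi_le_l1 c00_restr in blast)
    also have "\<dots> \<le> l1 x" by (rule sum_l1_restr[OF Es(1) x])
    finally show "s \<le> l1 x" .
  qed
  then show ?thesis by (auto simp: bdd_above_def)
qed

lemma Sset_upper: "c00 x \<Longrightarrow> admissible Es \<Longrightarrow>
   (\<Sum>j < length Es. tsi_iter m (restr (Es ! j) x)) \<le> Sup (Sset m x)"
  by (rule cSup_upper[OF _ Sset_bdd]) auto

lemma Sset_least: "(\<And>Es. admissible Es \<Longrightarrow> (\<Sum>j < length Es. tsi_iter m (restr (Es ! j) x)) \<le> B)
   \<Longrightarrow> Sup (Sset m x) \<le> B"
  by (rule cSup_least) (use adm_nil in auto)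

lemma tsi_zero: "tsi_iter m (\<lambda>i. 0) = 0"
proof -
  have "tsi_iter m (\<lambda>i. 0) \<le> l1 (\<lambda>i. 0)" by (rule tsi_le_l1[OF c00_zero])
  moreover have "l1 (\<lambda>i. 0) = 0" by (simp add: l1_def)
  moreover have "0 \<le> tsi_iter m (\<lambda>i. 0)" by (rule tsi_nonneg[OF c00_zero])
  ultimately show ?thesis by linarith
qed

lemma restr_abs: "restr E (\<lambda>i. \<bar>x i\<bar>) = (\<lambda>i. \<bar>restr E x i\<bar>)"
  by (auto simp: restr_def)

lemma tsi_abs: "tsi_iter m (\<lambda>i. \<bar>x i\<bar>) = tsi_iter m x"
proof (induction m arbitrary: x)
  case 0 then show ?case by (simp add: sup_norm_def)
next
  case (Suc m)
  have "Sset m (\<lambda>i. \<bar>x i\<bar>) = Sset m x" by (simp add: restr_abs Suc.IH)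
  then show ?case by (simp add: Suc.IH)
qed

lemma restr_add: "restr E (\<lambda>i. x i + y i) = (\<lambda>i. restr E x i + restr E y i)"
  by (auto simp: restr_def)

lemma restr_mult: "restr E (\<lambda>i. c * x i) = (\<lambda>i. c * restr E x i)"
  by (auto simp: restr_def)

lemma tsi_triangle: "c00 x \<Longrightarrow> c00 y \<Longrightarrow> tsi_iter m (\<lambda>i. x i + y i) \<le> tsi_iter m x + tsi_iter m y"
proof (induction m arbitrary: x y)
  case 0
  have "sup_norm (\<lambda>i. x i + y i) \<le> sup_norm x + sup_norm y"
  proof (rule sup_norm_le)
    fix i
    have "\<bar>x i + y i\<bar> \<le> \<bar>x i\<bar> + \<bar>y i\<bar>" by (rule abs_triangle_ineq)
    also have "\<dots> \<le> sup_norm x + sup_norm y" using sup_norm_ge[OF 0(1)] sup_norm_ge[OF 0(2)] by (simp add: add_mono)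
    finally show "\<bar>x i + y i\<bar> \<le> sup_norm x + sup_norm y" .
  qed
  then show ?case by simp
next
  case (Suc m)
  have A: "tsi_iter m (\<lambda>i. x i + y i) \<le> tsi_iter (Suc m) x + tsi_iter (Suc m) y"
    using Suc.IH[OF Suc.prems] tsi_mono_step[of m x] tsi_mono_step[of m y] by linarith
  have B: "Sup (Sset m (\<lambda>i. x i + y i)) \<le> Sup (Sset m x) + Sup (Sset m y)"
  proof (rule Sset_least)
    fix Es assume Es: "admissible Es"
    have "(\<Sum>j<length Es. tsi_iter m (restr (Es ! j) (\<lambda>i. x i + y i)))
        \<le> (\<Sum>j<length Es. tsi_iter m (restr (Es ! j) x) + tsi_iter m (restr (Es ! j) y))"
      unfolding restr_add by (intro sum_mono Suc.IH c00_restr Suc.prems)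
    also have "\<dots> = (\<Sum>j<length Es. tsi_iter m (restr (Es ! j) x)) + (\<Sum>j<length Es. tsi_iter m (restr (Es ! j) y))"
      by (simp add: sum.distrib)
    also have "\<dots> \<le> Sup (Sset m x) + Sup (Sset m y)"
      using Sset_upper[OF Suc.prems(1) Es, of m] Sset_upper[OF Suc.prems(2) Es, of m] by linarith
    finally show "(\<Sum>j<length Es. tsi_iter m (restr (Es ! j) (\<lambda>i. x i + y i))) \<le> Sup (Sset m x) + Sup (Sset m y)" .
  qed
  have "(1/2) * Sup (Sset m (\<lambda>i. x i + y i)) \<le> tsi_iter (Suc m) x + tsi_iter (Suc m) y"
  proof -
    have "(1/2) * Sup (Sset m x) \<le> tsi_iter (Suc m) x" by simp
    moreover have "(1/2) * Sup (Sset m y) \<le> tsi_iter (Suc m) y" by simp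
    ultimately show ?thesis using B by linarith
  qed
  then show ?case using A by (simp only: tsi_Suc[of m "\<lambda>i. x i + y i"] max.bounded_iff)
qed

lemma tsi_homog: "0 \<le> c \<Longrightarrow> c00 x \<Longrightarrow> tsi_iter m (\<lambda>i. c * x i) \<le> c * tsi_iter m x"
proof (induction m arbitrary: x)
  case 0
  have "sup_norm (\<lambda>i. c * x i) \<le> c * sup_norm x"
  proof (rule sup_norm_le)
    fix i show "\<bar>c * x i\<bar> \<le> c * sup_norm x"
      using sup_norm_ge[OF 0(2), of i] 0(1) by (simp add: abs_mult mult_left_mono)
  qed
  then show ?case by simp
next
  case (Suc m)
  have A: "tsi_iter m (\<lambda>i. c * x i) \<le> c * tsi_iter (Suc m) x"
    using Suc.IH[OF Suc.prems] mult_left_mono[OF tsi_mono_step[of m x] Suc.prems(1)] by linarith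
  have B: "Sup (Sset m (\<lambda>i. c * x i)) \<le> c * Sup (Sset m x)"
  proof (rule Sset_least)
    fix Es assume Es: "admissible Es"
    have "(\<Sum>j<length Es. tsi_iter m (restr (Es ! j) (\<lambda>i. c * x i)))
        \<le> (\<Sum>j<length Es. c * tsi_iter m (restr (Es ! j) x))"
      unfolding restr_mult by (intro sum_mono Suc.IH c00_restr Suc.prems)
    also have "\<dots> = c * (\<Sum>j<length Es. tsi_iter m (restr (Es ! j) x))"
      by (simp add: sum_distrib_left)
    also have "\<dots> \<le> c * Sup (Sset m x)"
      using Sset_upper[OF Suc.prems(2) Es, of m] Suc.prems(1) by (simp add: mult_left_mono)
    finally show "(\<Sum>j<length Es. tsi_iter m (restr (Es ! j) (\<lambda>i. c * x i))) \<le> c * Sup (Sset m x)" .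
  qed
  have "(1/2) * Sup (Sset m (\<lambda>i. c * x i)) \<le> c * tsi_iter (Suc m) x"
  proof -
    have "(1/2) * Sup (Sset m x) \<le> tsi_iter (Suc m) x" by simp
    then have "c * ((1/2) * Sup (Sset m x)) \<le> c * tsi_iter (Suc m) x" using Suc.prems(1) by (rule mult_left_mono)
    then show ?thesis using B by linarith
  qed
  then show ?case using A by (simp only: tsi_Suc[of m "\<lambda>i. c * x i"] max.bounded_iff)
qed

lemma tsi_sum:
  assumes "finite T" "\<And>t. t \<in> T \<Longrightarrow> c00 (x t)"
  shows "tsi_iter m (\<lambda>i. \<Sum>t\<in>T. x t i) \<le> (\<Sum>t\<in>T. tsi_iter m (x t))"
  using assms
proof (induction T rule: finite_induct)
  case empty then show ?case by (simp add: tsi_zero)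
next
  case (insert a F)
  have "tsi_iter m (\<lambda>i. \<Sum>t\<in>insert a F. x t i) = tsi_iter m (\<lambda>i. x a i + (\<Sum>t\<in>F. x t i))"
    using insert by simp
  also have "\<dots> \<le> tsi_iter m (x a) + tsi_iter m (\<lambda>i. \<Sum>t\<in>F. x t i)"
    by (rule tsi_triangle) (use insert c00_sum in auto)
  also have "\<dots> \<le> tsi_iter m (x a) + (\<Sum>t\<in>F. tsi_iter m (x t))"
    using insert by simp
  finally show ?case using insert by simp
qed



definition good :: "real \<Rightarrow> real \<Rightarrow> (nat \<Rightarrow> real) \<Rightarrow> bool" where
  "good \<beta> \<delta> w \<longleftrightarrow> (\<forall>m S. tsi_iter m (restr S w) \<le> \<delta> + \<beta> * l1 (restr S w))"

lemma sum_le_one_uniq: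
  fixes f :: "nat \<Rightarrow> real"
  assumes "finite A" "\<And>t t'. t \<in> A \<Longrightarrow> t' \<in> A \<Longrightarrow> t = t'" "\<And>t. t \<in> A \<Longrightarrow> f t \<le> 1"
  shows "sum f A \<le> 1"
proof -
  have c: "card A \<le> 1" using assms(1,2) by (simp add: card_le_Suc0_iff_eq)
  have "sum f A \<le> of_nat (card A) * 1" by (rule sum_bounded_above) (use assms(3) in auto)
  also have "\<dots> \<le> 1" using c by simp
  finally show ?thesis .
qed

lemma block_uniq:
  assumes "strict_mono (a::nat \<Rightarrow> nat)" "a t \<le> i" "i < a (Suc t)" "a t' \<le> i" "i < a (Suc t')"
  shows "t = t'"
proof (rule ccontr)
  assume "t \<noteq> t'"
  then consider "Suc t \<le> t'" | "Suc t' \<le> t" by linarith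
  then show False
  proof cases
    case 1 then have "a (Suc t) \<le> a t'" using assms(1) by (simp add: strict_mono_less_eq)
    then show False using assms by linarith
  next
    case 2 then have "a (Suc t') \<le> a t" using assms(1) by (simp add: strict_mono_less_eq)
    then show False using assms by linarith
  qed
qed

lemma l1_restr_le: "c00 x \<Longrightarrow> l1 (restr S x) \<le> l1 x"
proof -
  assume "c00 x"
  have "l1 (restr S x) = (\<Sum>i\<in>supp x \<inter> S. \<bar>x i\<bar>)" by (rule l1_restr)
  also have "\<dots> \<le> (\<Sum>i\<in>supp x. \<bar>x i\<bar>)" by (rule sum_mono2) (use \<open>c00 x\<close> in \<open>auto simp: c00_supp\<close>)
  finally show ?thesis by (simp add: l1_def)
qed

lemma restr_sum: "restr S (\<lambda>i. c * (\<Sum>t\<in>T. U t i)) = (\<lambda>i. c * (\<Sum>t\<in>T. restr S (U t) i))"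
  by (auto simp: restr_def)

lemma avg_good:
  fixes U :: "nat \<Rightarrow> nat \<Rightarrow> real" and a :: "nat \<Rightarrow> nat" and M :: nat
  assumes M: "M > 0" and a: "strict_mono a"
    and U0: "\<And>t i. 0 \<le> U t i" and Uc: "\<And>t. c00 (U t)"
    and Us: "\<And>t. supp (U t) \<subseteq> {a t ..< a (Suc t)}" and Ul: "\<And>t. l1 (U t) = 1"
    and Ug: "\<And>t. good \<beta> (d t) (U t)" and d: "\<And>t. real (a t + 1) * d t \<le> \<epsilon>/2" "\<And>t. 0 \<le> d t"
    and Meps: "1 / real M \<le> \<epsilon>/2" and \<beta>: "0 \<le> \<beta>"
  shows "good (\<beta>/2) \<epsilon> (\<lambda>i. (1/real M) * (\<Sum>t<M. U t i))"
proof -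
  define w where "w = (\<lambda>i. (1/real M) * (\<Sum>t<M. U t i))"
  have Mpos: "0 < real M" using M by simp
  have "0 < 1 / real M" using Mpos by simp
  then have eps: "0 \<le> \<epsilon>" using Meps by linarith
  define D where "D = (\<Union>t<M. supp (U t))"
  have Df: "finite D" unfolding D_def using Uc by (auto simp: c00_supp)
  have cR: "\<And>S t. c00 (restr S (U t))" using Uc c00_restr by blast
  have rw: "restr S w = (\<lambda>i. (1/real M) * (\<Sum>t<M. restr S (U t) i))" for S
    unfolding w_def by (rule restr_sum)
  have rU0: "0 \<le> restr S (U t) i" for S t i using U0 by (simp add: restr_def)
  have l1w: "l1 (restr S w) = (1/real M) * (\<Sum>t<M. l1 (restr S (U t)))" for S
  proof -
    have s1: "supp (restr S w) \<subseteq> D"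
    proof
      fix i assume "i \<in> supp (restr S w)"
      then have "(\<Sum>t<M. restr S (U t) i) \<noteq> 0" unfolding rw supp_def by auto
      then obtain t where "t < M" "restr S (U t) i \<noteq> 0" by (rule sum.not_neutral_contains_not_neutral) auto
      then have "t < M" "U t i \<noteq> 0" by (simp_all add: restr_def split: if_splits)
      then show "i \<in> D" unfolding D_def supp_def by blast
    qed
    have s2: "supp (restr S (U t)) \<subseteq> D" if "t < M" for t
      using that unfolding D_def supp_restr by auto
    have "l1 (restr S w) = (\<Sum>i\<in>D. \<bar>restr S w i\<bar>)" by (rule l1_superset[OF Df s1])
    also have "\<dots> = (\<Sum>i\<in>D. (1/real M) * (\<Sum>t<M. restr S (U t) i))"
      unfolding rw by (rule sum.cong) (auto simp: rU0 sum_nonneg)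
    also have "\<dots> = (1/real M) * (\<Sum>t<M. \<Sum>i\<in>D. restr S (U t) i)"
      unfolding sum_distrib_left[symmetric] by (subst sum.swap) (rule refl)
    also have "\<dots> = (1/real M) * (\<Sum>t<M. l1 (restr S (U t)))"
    proof -
      have "(\<Sum>i\<in>D. restr S (U t) i) = l1 (restr S (U t))" if "t < M" for t
        using l1_superset[OF Df s2[OF that]] rU0 by simp
      then show ?thesis by simp
    qed
    finally show ?thesis .
  qed
  have lU: "l1 (restr S (U t)) \<le> 1" for S t using l1_restr_le[OF Uc, of S t] Ul[of t] by simp
  have Ule1: "U t i \<le> 1" for t i using abs_le_l1[OF Uc, of t i] Ul U0[of t i] by simp
  have claim: "tsi_iter m (restr S w) \<le> \<epsilon> + (\<beta>/2) * l1 (restr S w)" for m S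
  proof (induction m arbitrary: S)
    case 0
    have "sup_norm (restr S w) \<le> 1 / real M"
    proof (rule sup_norm_le)
      fix i
      have "(\<Sum>t<M. restr S (U t) i) = (\<Sum>t\<in>{t. t < M \<and> restr S (U t) i \<noteq> 0}. restr S (U t) i)"
        by (rule sum.mono_neutral_right) auto
      also have "\<dots> \<le> 1"
      proof (rule sum_le_one_uniq)
        fix t t' assume "t \<in> {t. t < M \<and> restr S (U t) i \<noteq> 0}" "t' \<in> {t. t < M \<and> restr S (U t) i \<noteq> 0}"
        then have "i \<in> supp (U t)" "i \<in> supp (U t')" by (auto simp: supp_def restr_def split: if_splits)
        then have "a t \<le> i" "i < a (Suc t)" "a t' \<le> i" "i < a (Suc t')" using Us[of t] Us[of t'] by auto
        then show "t = t'" using block_uniq[OF a] by blast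
      next
        fix t show "restr S (U t) i \<le> 1" using Ule1 by (simp add: restr_def)
      qed simp
      finally have "(\<Sum>t<M. restr S (U t) i) \<le> 1" .
      moreover have "0 \<le> (\<Sum>t<M. restr S (U t) i)" by (simp add: rU0 sum_nonneg)
      ultimately show "\<bar>restr S w i\<bar> \<le> 1 / real M" unfolding rw using Mpos
        by (simp add: abs_mult divide_right_mono)
    qed
    moreover have "0 \<le> (\<beta>/2) * l1 (restr S w)" using \<beta> l1_nonneg by simp
    ultimately show ?case using Meps eps by simp
  next
    case (Suc m)
    have B: "Sup (Sset m (restr S w)) \<le> 2 * \<epsilon> + \<beta> * l1 (restr S w)"
    proof (rule Sset_least)
      fix Es assume Es: "admissible Es"
      define L where "L = length Es"
      show "(\<Sum>j<length Es. tsi_iter m (restr (Es ! j) (restr S w))) \<le> 2 * \<epsilon> + \<beta> * l1 (restr S w)"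
      proof (cases "L = 0")
        case True
        then show ?thesis using eps \<beta> l1_nonneg[of "restr S w"] by (simp add: L_def)
      next
        case False
        define p where "p = Min (Es ! 0)"
        have Lp: "L \<le> Suc p" using adm_len[OF Es] False unfolding L_def p_def by simp
        have gep: "p \<le> x" if "j < L" "x \<in> Es ! j" for j x
          using adm_ge_min[OF Es] that unfolding p_def L_def by blast
        define P where "P t = (\<Sum>j<L. tsi_iter m (restr (Es ! j) (restr S (U t))))" for t
        have step1: "tsi_iter m (restr (Es ! j) (restr S w)) \<le> (1/real M) * (\<Sum>t<M. tsi_iter m (restr (Es ! j) (restr S (U t))))" for j
        proof -
          have "restr (Es ! j) (restr S w) = (\<lambda>i. (1/real M) * (\<Sum>t<M. restr (Es ! j) (restr S (U t)) i))"
            unfolding w_def restr_restr restr_sum by simp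
          then have "tsi_iter m (restr (Es ! j) (restr S w)) = tsi_iter m (\<lambda>i. (1/real M) * (\<Sum>t<M. restr (Es ! j) (restr S (U t)) i))" by simp
          also have "\<dots> \<le> (1/real M) * tsi_iter m (\<lambda>i. \<Sum>t<M. restr (Es ! j) (restr S (U t)) i)"
            using Mpos by (intro tsi_homog c00_sum c00_restr Uc) auto
          also have "\<dots> \<le> (1/real M) * (\<Sum>t<M. tsi_iter m (restr (Es ! j) (restr S (U t))))"
            by (rule mult_left_mono[OF tsi_sum]) (use Mpos in \<open>auto intro: c00_restr Uc\<close>)
          finally show ?thesis .
        qed
        have Pt: "P t \<le> \<epsilon>/2 + \<beta> * l1 (restr S (U t)) + (if a t \<le> p \<and> p < a (Suc t) then 1 else 0)" for t
        proof (cases "p < a t")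
          case True
          have "P t \<le> (\<Sum>j<L. d t + \<beta> * l1 (restr (Es ! j) (restr S (U t))))"
            unfolding P_def restr_restr by (rule sum_mono) (use Ug in \<open>auto simp: good_def\<close>)
          also have "\<dots> = real L * d t + \<beta> * (\<Sum>j<L. l1 (restr (Es ! j) (restr S (U t))))"
            by (simp add: sum.distrib sum_distrib_left)
          also have "\<dots> \<le> \<epsilon>/2 + \<beta> * l1 (restr S (U t))"
          proof -
            have "real L * d t \<le> real (a t + 1) * d t" using Lp True d(2)[of t] by (intro mult_right_mono) auto
            moreover have "(\<Sum>j<L. l1 (restr (Es ! j) (restr S (U t)))) \<le> l1 (restr S (U t))"
              using sum_l1_restr[OF Es cR] unfolding L_def .
            moreover note mult_left_mono[OF calculation(2) \<beta>]
            ultimately show ?thesis using d(1)[of t] by linarith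
          qed
          finally show ?thesis using True by simp
        next
          case False
          show ?thesis
          proof (cases "p < a (Suc t)")
            case True
            have "P t \<le> (\<Sum>j<L. l1 (restr (Es ! j) (restr S (U t))))"
              unfolding P_def by (rule sum_mono) (use tsi_le_l1 cR c00_restr in blast)
            also have "\<dots> \<le> l1 (restr S (U t))" using sum_l1_restr[OF Es cR] unfolding L_def .
            also have "\<dots> \<le> 1" by (rule lU)
            finally have "P t \<le> 1" .
            moreover have "0 \<le> \<beta> * l1 (restr S (U t))" using \<beta> l1_nonneg by simp
            ultimately show ?thesis using True False eps by simp
          next
            case False2: False
            have "restr (Es ! j) (restr S (U t)) = (\<lambda>i. 0)" if "j < L" for j
            proof
              fix i
              show "restr (Es ! j) (restr S (U t)) i = 0"
              proof (cases "i \<in> Es ! j \<and> i \<in> supp (U t)")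
                case True
                then have "p \<le> i" using gep that by blast
                moreover have "i < a (Suc t)" using Us[of t] True by auto
                ultimately show ?thesis using False2 by simp
              next
                case False then show ?thesis by (auto simp: restr_def supp_def)
              qed
            qed
            then have "P t = 0" unfolding P_def by (simp add: tsi_zero)
            then show ?thesis using eps \<beta> l1_nonneg[of "restr S (U t)"] by simp
          qed
        qed
        have "(\<Sum>j<length Es. tsi_iter m (restr (Es ! j) (restr S w)))
            \<le> (\<Sum>j<L. (1/real M) * (\<Sum>t<M. tsi_iter m (restr (Es ! j) (restr S (U t)))))"
          unfolding L_def by (rule sum_mono) (rule step1)
        also have "\<dots> = (1/real M) * (\<Sum>t<M. P t)"
          unfolding P_def sum_distrib_left[symmetric] by (subst sum.swap) (rule refl)
        also have "\<dots> \<le> (1/real M) * (\<Sum>t<M. \<epsilon>/2 + \<beta> * l1 (restr S (U t)) + (if a t \<le> p \<and> p < a (Suc t) then 1 else 0))"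
          by (rule mult_left_mono[OF sum_mono[OF Pt]]) (use Mpos in auto)
        also have "\<dots> = \<epsilon>/2 + \<beta> * l1 (restr S w) + (1/real M) * (\<Sum>t<M. (if a t \<le> p \<and> p < a (Suc t) then 1 else 0))"
          unfolding l1w using Mpos by (simp add: sum.distrib sum_distrib_left algebra_simps)
        also have "\<dots> \<le> \<epsilon>/2 + \<beta> * l1 (restr S w) + (1/real M) * 1"
        proof -
          have "(\<Sum>t<M. (if a t \<le> p \<and> p < a (Suc t) then 1 else 0)::real) = (\<Sum>t\<in>{t. t < M \<and> a t \<le> p \<and> p < a (Suc t)}. 1)"
            by (rule sum.mono_neutral_cong_right) auto
          also have "\<dots> \<le> 1"
            by (rule sum_le_one_uniq) (use block_uniq[OF a] in auto)
          finally show ?thesis using Mpos by (simp add: divide_right_mono)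
        qed
        also have "\<dots> \<le> 2 * \<epsilon> + \<beta> * l1 (restr S w)" using Meps eps by simp
        finally show ?thesis .
      qed
    qed
    have "(1/2) * Sup (Sset m (restr S w)) \<le> \<epsilon> + (\<beta>/2) * l1 (restr S w)"
      using B eps by simp
    then show ?case using Suc.IH by (simp only: tsi_Suc max.bounded_iff)
  qed
  show ?thesis unfolding good_def w_def[symmetric] using claim by blast
qed



lemma l1_avg:
  assumes "finite T" "\<And>t. t \<in> T \<Longrightarrow> c00 (V t)" "\<And>t i. 0 \<le> V t i" "0 \<le> c"
  shows "l1 (\<lambda>i. c * (\<Sum>t\<in>T. V t i)) = c * (\<Sum>t\<in>T. l1 (V t))"
proof -
  define D where "D = (\<Union>t\<in>T. supp (V t))"
  have Df: "finite D" unfolding D_def using assms(1,2) by (auto simp: c00_supp)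
  have s1: "supp (\<lambda>i. c * (\<Sum>t\<in>T. V t i)) \<subseteq> D"
  proof
    fix i assume "i \<in> supp (\<lambda>i. c * (\<Sum>t\<in>T. V t i))"
    then have "(\<Sum>t\<in>T. V t i) \<noteq> 0" unfolding supp_def by auto
    then obtain t where "t \<in> T" "V t i \<noteq> 0" by (rule sum.not_neutral_contains_not_neutral) auto
    then show "i \<in> D" unfolding D_def supp_def by blast
  qed
  have s2: "supp (V t) \<subseteq> D" if "t \<in> T" for t using that unfolding D_def by auto
  have "l1 (\<lambda>i. c * (\<Sum>t\<in>T. V t i)) = (\<Sum>i\<in>D. \<bar>c * (\<Sum>t\<in>T. V t i)\<bar>)" by (rule l1_superset[OF Df s1])
  also have "\<dots> = (\<Sum>i\<in>D. c * (\<Sum>t\<in>T. V t i))"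
    by (rule sum.cong) (auto simp: assms(3,4) sum_nonneg)
  also have "\<dots> = c * (\<Sum>t\<in>T. \<Sum>i\<in>D. V t i)"
    unfolding sum_distrib_left[symmetric] by (subst sum.swap) (rule refl)
  also have "\<dots> = c * (\<Sum>t\<in>T. l1 (V t))"
  proof -
    have "(\<Sum>i\<in>D. V t i) = l1 (V t)" if "t \<in> T" for t
      using l1_superset[OF Df s2[OF that]] assms(3) by simp
    then show ?thesis by simp
  qed
  finally show ?thesis .
qed

lemma build:
  assumes K: "infinite K"
  shows "\<epsilon> > 0 \<Longrightarrow> \<exists>u. (\<forall>i. 0 \<le> u i) \<and> c00 u \<and> supp u \<subseteq> K \<inter> {q..} \<and> l1 u = 1 \<and> good (1/2^r) \<epsilon> u"
proof (induction r arbitrary: \<epsilon> q)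
  case 0
  obtain p where p: "p \<in> K" "q \<le> p" using K by (meson infinite_nat_iff_unbounded_le)
  define u where "u = (\<lambda>i::nat. if i = p then 1 else (0::real))"
  have su: "supp u = {p}" by (auto simp: u_def supp_def)
  have cu: "c00 u" by (simp add: c00_supp su)
  have lu: "l1 u = 1" unfolding l1_def su by (simp add: u_def)
  have "good 1 \<epsilon> u" unfolding good_def
  proof (intro allI)
    fix m S
    have "tsi_iter m (restr S u) \<le> l1 (restr S u)" by (rule tsi_le_l1[OF c00_restr[OF cu]])
    then show "tsi_iter m (restr S u) \<le> \<epsilon> + 1 * l1 (restr S u)" using 0 by simp
  qed
  then show ?case using p su cu lu by (intro exI[of _ u]) (auto simp: u_def)
next
  case (Suc r)
  define P where "P e q' u \<longleftrightarrow> (\<forall>i. 0 \<le> u i) \<and> c00 u \<and> supp u \<subseteq> K \<inter> {q'..} \<and> l1 u = 1 \<and> good (1/2^r) e u"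
    for e q' and u :: "nat \<Rightarrow> real"
  have "\<forall>e q'. \<exists>u. e > 0 \<longrightarrow> P e q' u" using Suc.IH unfolding P_def by blast
  then obtain UF where UF: "\<And>e q'. e > 0 \<Longrightarrow> P e q' (UF e q')" by metis
  define M where "M = nat \<lceil>2 / \<epsilon>\<rceil> + 1"
  have Mpos: "M > 0" unfolding M_def by simp
  have Meps: "1 / real M \<le> \<epsilon> / 2"
  proof -
    have "2 / \<epsilon> \<le> real M" unfolding M_def by linarith
    then show ?thesis using Suc.prems Mpos by (simp add: field_simps)
  qed
  define d where "d x = (\<epsilon>/2) / (real x + 1)" for x :: nat
  have dpos: "d x > 0" for x using Suc.prems unfolding d_def by simp
  define G where "G x = UF (d x) x" for x
  have G: "P (d x) x (G x)" for x unfolding G_def by (rule UF[OF dpos])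
  have G0: "\<And>i. 0 \<le> G x i" and Gc: "c00 (G x)" and Gs: "supp (G x) \<subseteq> K \<inter> {x..}"
    and Gl: "l1 (G x) = 1" and Gg: "good (1/2^r) (d x) (G x)" for x using G[of x] unfolding P_def by auto
  have Gne: "supp (G x) \<noteq> {}" for x using Gl[of x] unfolding l1_def by auto
  have Gf: "finite (supp (G x))" for x using Gc[of x] by (simp add: c00_supp)
  define a where "a = rec_nat q (\<lambda>_ x. Suc (Max (supp (G x))))"
  have a0: "a 0 = q" unfolding a_def by simp
  have aS: "a (Suc t) = Suc (Max (supp (G (a t))))" for t unfolding a_def by simp
  define U where "U t = G (a t)" for t
  have Us: "supp (U t) \<subseteq> {a t ..< a (Suc t)}" for t
  proof
    fix i assume i: "i \<in> supp (U t)"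
    then have "a t \<le> i" using Gs[of "a t"] unfolding U_def by auto
    moreover have "i \<le> Max (supp (G (a t)))" using i Gf unfolding U_def by simp
    ultimately show "i \<in> {a t ..< a (Suc t)}" unfolding aS by simp
  qed
  have amono: "strict_mono a"
  proof (rule strict_mono_Suc_iff[THEN iffD2], intro allI)
    fix t
    obtain i where "i \<in> supp (U t)" using Gne unfolding U_def by blast
    then show "a t < a (Suc t)" using Us[of t] by auto
  qed
  have dcond: "real (a t + 1) * d (a t) \<le> \<epsilon>/2" for t unfolding d_def by (simp add: field_simps)
  define w where "w = (\<lambda>i. (1/real M) * (\<Sum>t<M. U t i))"
  have gw: "good ((1/2^r)/2) \<epsilon> w" unfolding w_def
    by (rule avg_good[OF Mpos amono _ _ Us _ _ dcond _ Meps]) (use G0 Gc Gl Gg dpos in \<open>auto simp: U_def intro: less_imp_le\<close>)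
  have w0: "\<forall>i. 0 \<le> w i" unfolding w_def U_def using G0 by (simp add: sum_nonneg)
  have wc: "c00 w" unfolding w_def by (intro c00_mult c00_sum) (auto simp: U_def Gc)
  have ws: "supp w \<subseteq> K \<inter> {q..}"
  proof
    fix i assume "i \<in> supp w"
    then have "(\<Sum>t<M. U t i) \<noteq> 0" unfolding supp_def w_def by auto
    then obtain t where "t < M" "U t i \<noteq> 0" by (rule sum.not_neutral_contains_not_neutral) auto
    then have "i \<in> K" "a t \<le> i" using Gs[of "a t"] unfolding U_def supp_def by auto
    moreover have "q \<le> a t" using a0 amono by (metis le0 strict_mono_less_eq)
    ultimately show "i \<in> K \<inter> {q..}" by simp
  qed
  have wl: "l1 w = 1"
  proof -
    have "l1 w = (1/real M) * (\<Sum>t<M. l1 (U t))" unfolding w_def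
      by (rule l1_avg) (auto simp: U_def Gc G0)
    also have "\<dots> = 1" using Mpos by (simp add: U_def Gl)
    finally show ?thesis .
  qed
  have "(1/2^r)/2 = (1/2^Suc r :: real)" by simp
  then show ?case using gw w0 wc ws wl by (intro exI[of _ w]) (simp add: mult.commute)
qed

lemma core:
  assumes K: "infinite K"
  shows "\<exists>y. (\<forall>i. 0 \<le> y i) \<and> c00 y \<and> supp y \<subseteq> K \<and> (\<forall>m. tsi_iter m y \<le> 1) \<and> c < l1 y"
proof -
  define C where "C = max c 1 + 1"
  have C1: "C \<ge> 2" "c < C" unfolding C_def by auto
  obtain r where r: "4 * C < 2 ^ r" using real_arch_pow[of 2 "4 * C"] by auto
  define \<epsilon> where "\<epsilon> = 1 / (4 * C)"
  have epos: "\<epsilon> > 0" unfolding \<epsilon>_def using C1 by simp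
  obtain u where u: "\<forall>i. 0 \<le> u i" "c00 u" "supp u \<subseteq> K \<inter> {0..}" "l1 u = 1" "good (1/2^r) \<epsilon> u"
    using build[OF K epos, of 0 r] by blast
  have ru: "restr UNIV u = u" by (simp add: restr_def)
  have rb: "1 / 2 ^ r \<le> \<epsilon>" unfolding \<epsilon>_def using r C1 by (simp add: field_simps)
  have tu: "tsi_iter m u \<le> 1 / (2 * C)" for m
  proof -
    have "tsi_iter m u \<le> \<epsilon> + (1/2^r) * l1 u" using u(5) unfolding good_def by (metis ru)
    also have "\<dots> \<le> 2 * \<epsilon>" using rb u(4) by simp
    also have "\<dots> = 1 / (2 * C)" unfolding \<epsilon>_def by simp
    finally show ?thesis .
  qed
  define y where "y = (\<lambda>i. (2 * C) * u i)"
  have ty: "tsi_iter m y \<le> 1" for m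
  proof -
    have "tsi_iter m y \<le> (2 * C) * tsi_iter m u" unfolding y_def by (rule tsi_homog) (use C1 u(2) in auto)
    also have "\<dots> \<le> (2 * C) * (1 / (2 * C))" by (rule mult_left_mono[OF tu]) (use C1 in auto)
    also have "\<dots> = 1" using C1 by simp
    finally show ?thesis .
  qed
  have ly: "l1 y = 2 * C"
  proof -
    have "l1 y = (2 * C) * (\<Sum>t\<in>{0::nat}. l1 u)" unfolding y_def
      using l1_avg[of "{0::nat}" "\<lambda>_. u" "2 * C"] u(1,2) C1 by simp
    then show ?thesis using u(4) by simp
  qed
  have sy: "supp y \<subseteq> K" using u(3) C1 unfolding y_def supp_def by auto
  show ?thesis
    by (rule exI[of _ y]) (use u(1,2) C1 ty ly sy in \<open>auto simp: y_def intro: c00_mult\<close>)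
qed



lemma tsi_bdd: "c00 x \<Longrightarrow> bdd_above (range (\<lambda>m. tsi_iter m x))"
  using tsi_le_l1 by (auto simp: bdd_above_def)

lemma tsi_le_norm: "c00 x \<Longrightarrow> tsi_iter m x \<le> tsi_norm x"
  unfolding tsi_norm_def by (rule cSUP_upper[OF _ tsi_bdd]) auto

lemma tsi_norm_le: "(\<And>m. tsi_iter m x \<le> B) \<Longrightarrow> tsi_norm x \<le> B"
  unfolding tsi_norm_def by (rule cSUP_least) auto

lemma abs_le_tsi_norm: "c00 x \<Longrightarrow> \<bar>x i\<bar> \<le> tsi_norm x"
  using tsi_le_norm[of x 0] sup_norm_ge[of x i] by simp

lemma tsi_norm_abs: "tsi_norm (\<lambda>i. \<bar>x i\<bar>) = tsi_norm x"
  unfolding tsi_norm_def by (simp add: tsi_abs)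

lemma tsi_norm_zero: "tsi_norm (\<lambda>i. 0) = 0"
  unfolding tsi_norm_def by (simp add: tsi_zero)

abbreviation TS :: "(nat \<Rightarrow> real) \<Rightarrow> real set" where
  "TS b \<equiv> {(\<Sum>i \<in> {i. x i \<noteq> 0}. b i * x i) | x. c00 x \<and> tsi_norm x \<le> 1}"

lemma TS_bound:
  assumes b: "c00 b" and x: "c00 x" "tsi_norm x \<le> 1"
  shows "(\<Sum>i \<in> {i. x i \<noteq> 0}. b i * x i) \<le> (\<Sum>i\<in>supp b. \<bar>b i\<bar>)"
proof -
  have fx: "finite {i. x i \<noteq> 0}" using x by (simp add: c00_def)
  have fb: "finite (supp b)" using b by (simp add: c00_supp)
  have "(\<Sum>i \<in> {i. x i \<noteq> 0}. b i * x i) = (\<Sum>i \<in> {i. x i \<noteq> 0} \<inter> supp b. b i * x i)"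
    by (rule sum.mono_neutral_right) (use fx in \<open>auto simp: supp_def\<close>)
  also have "\<dots> \<le> (\<Sum>i \<in> {i. x i \<noteq> 0} \<inter> supp b. \<bar>b i\<bar>)"
  proof (rule sum_mono)
    fix i
    have "\<bar>x i\<bar> \<le> 1" using abs_le_tsi_norm[OF x(1), of i] x(2) by linarith
    then have "b i * x i \<le> \<bar>b i\<bar> * 1"
      by (metis abs_ge_self abs_mult mult_left_mono abs_ge_zero order_trans)
    then show "b i * x i \<le> \<bar>b i\<bar>" by simp
  qed
  also have "\<dots> \<le> (\<Sum>i\<in>supp b. \<bar>b i\<bar>)" by (rule sum_mono2) (use fb in auto)
  finally show ?thesis .
qed

lemma TS_bdd: "c00 b \<Longrightarrow> bdd_above (TS b)"
  using TS_bound unfolding bdd_above_def by blast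

lemma TS_ne: "0 \<in> TS b"
proof -
  have "c00 (\<lambda>i. 0::real) \<and> tsi_norm (\<lambda>i. 0) \<le> 1" by (simp add: c00_zero tsi_norm_zero)
  moreover have "(\<Sum>i \<in> {i. (0::real) \<noteq> 0}. b i * 0) = 0" by simp
  ultimately show ?thesis by force
qed

lemma tstar_lower: "c00 b \<Longrightarrow> c00 x \<Longrightarrow> tsi_norm x \<le> 1 \<Longrightarrow>
   (\<Sum>i \<in> {i. x i \<noteq> 0}. b i * x i) \<le> tstar_norm b"
  unfolding tstar_norm_def by (rule cSup_upper[OF _ TS_bdd]) auto

lemma tstar_upper: "(\<And>x. c00 x \<Longrightarrow> tsi_norm x \<le> 1 \<Longrightarrow> (\<Sum>i \<in> {i. x i \<noteq> 0}. b i * x i) \<le> B)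
   \<Longrightarrow> tstar_norm b \<le> B"
  unfolding tstar_norm_def by (rule cSup_least) (use TS_ne in auto)

lemma tstar_nonneg: "c00 b \<Longrightarrow> 0 \<le> tstar_norm b"
  unfolding tstar_norm_def by (rule cSup_upper[OF TS_ne TS_bdd])

lemma tstar_mono:
  assumes b': "c00 b'" and le: "\<And>i. 0 \<le> b i" "\<And>i. b i \<le> b' i"
  shows "tstar_norm b \<le> tstar_norm b'"
proof (rule tstar_upper)
  fix x assume x: "c00 x" "tsi_norm x \<le> 1"
  have "(\<Sum>i \<in> {i. x i \<noteq> 0}. b i * x i) \<le> (\<Sum>i \<in> {i. \<bar>x i\<bar> \<noteq> 0}. b' i * \<bar>x i\<bar>)"
  proof -
    have "b i * x i \<le> b' i * \<bar>x i\<bar>" for i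
      by (metis abs_ge_self abs_ge_zero le(1,2) mult_left_mono mult_right_mono order_trans)
    then show ?thesis by (simp add: sum_mono)
  qed
  also have "\<dots> \<le> tstar_norm b'"
    by (rule tstar_lower[OF b' c00_abs[OF x(1)]]) (simp add: tsi_norm_abs x(2))
  finally show "(\<Sum>i \<in> {i. x i \<noteq> 0}. b i * x i) \<le> tstar_norm b'" .
qed

lemma tstar_add:
  assumes "c00 b" "c00 b'"
  shows "tstar_norm (\<lambda>i. b i + b' i) \<le> tstar_norm b + tstar_norm b'"
proof (rule tstar_upper)
  fix x assume x: "c00 x" "tsi_norm x \<le> 1"
  have "(\<Sum>i \<in> {i. x i \<noteq> 0}. (b i + b' i) * x i) = (\<Sum>i \<in> {i. x i \<noteq> 0}. b i * x i) + (\<Sum>i \<in> {i. x i \<noteq> 0}. b' i * x i)"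
    by (simp add: distrib_right sum.distrib)
  also have "\<dots> \<le> tstar_norm b + tstar_norm b'"
    using tstar_lower[OF assms(1) x] tstar_lower[OF assms(2) x] by linarith
  finally show "(\<Sum>i \<in> {i. x i \<noteq> 0}. (b i + b' i) * x i) \<le> tstar_norm b + tstar_norm b'" .
qed

lemma tstar_scale:
  assumes c: "0 \<le> c" and b: "c00 b"
  shows "tstar_norm (\<lambda>i. c * b i) = c * tstar_norm b"
proof (rule antisym)
  show "tstar_norm (\<lambda>i. c * b i) \<le> c * tstar_norm b"
  proof (rule tstar_upper)
    fix x assume x: "c00 x" "tsi_norm x \<le> 1"
    have "(\<Sum>i \<in> {i. x i \<noteq> 0}. (c * b i) * x i) = c * (\<Sum>i \<in> {i. x i \<noteq> 0}. b i * x i)"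
      by (simp add: sum_distrib_left mult.assoc)
    also have "\<dots> \<le> c * tstar_norm b" by (rule mult_left_mono[OF tstar_lower[OF b x] c])
    finally show "(\<Sum>i \<in> {i. x i \<noteq> 0}. (c * b i) * x i) \<le> c * tstar_norm b" .
  qed
next
  show "c * tstar_norm b \<le> tstar_norm (\<lambda>i. c * b i)"
  proof (cases "c = 0")
    case True
    then show ?thesis using tstar_nonneg[OF c00_zero] by simp
  next
    case False
    then have cp: "0 < c" using c by simp
    have "tstar_norm b \<le> tstar_norm (\<lambda>i. c * b i) / c"
    proof (rule tstar_upper)
      fix x assume x: "c00 x" "tsi_norm x \<le> 1"
      have "(\<Sum>i \<in> {i. x i \<noteq> 0}. b i * x i) = (\<Sum>i \<in> {i. x i \<noteq> 0}. (c * b i) * x i) / c"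
        using cp by (simp add: sum_divide_distrib)
      also have "\<dots> \<le> tstar_norm (\<lambda>i. c * b i) / c"
        by (rule divide_right_mono[OF tstar_lower[OF c00_mult[OF b] x]]) (use cp in auto)
      finally show "(\<Sum>i \<in> {i. x i \<noteq> 0}. b i * x i) \<le> tstar_norm (\<lambda>i. c * b i) / c" .
    qed
    then show ?thesis using cp by (simp add: field_simps)
  qed
qed

lemma tstar_zero: "tstar_norm (\<lambda>i. 0) = 0"
  using tstar_scale[of 0 "\<lambda>i. 0"] c00_zero by simp

definition unitv :: "nat \<Rightarrow> nat \<Rightarrow> real" where "unitv p = (\<lambda>i. if i = p then 1 else 0)"

lemma c00_unitv: "c00 (unitv p)"
  unfolding c00_def unitv_def by simp

lemma tsi_norm_unitv: "tsi_norm (unitv p) \<le> 1"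
proof (rule tsi_norm_le)
  fix m
  have "tsi_iter m (unitv p) \<le> l1 (unitv p)" by (rule tsi_le_l1[OF c00_unitv])
  also have "l1 (unitv p) = 1"
  proof -
    have "supp (unitv p) = {p}" by (auto simp: unitv_def supp_def)
    then show ?thesis unfolding l1_def by (simp add: unitv_def)
  qed
  finally show "tsi_iter m (unitv p) \<le> 1" .
qed

lemma tstar_unit: "tstar_norm (unitv p) = 1"
proof (rule antisym)
  show "tstar_norm (unitv p) \<le> 1"
  proof (rule tstar_upper)
    fix x assume x: "c00 x" "tsi_norm x \<le> 1"
    have "(\<Sum>i \<in> {i. x i \<noteq> 0}. unitv p i * x i) = (\<Sum>i \<in> {i. x i \<noteq> 0}. if i = p then x i else 0)"
      by (rule sum.cong) (auto simp: unitv_def)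
    also have "\<dots> = (if p \<in> {i. x i \<noteq> 0} then x p else 0)"
      using x(1) by (simp add: c00_def)
    also have "\<dots> \<le> 1" using abs_le_tsi_norm[OF x(1), of p] x(2) by auto
    finally show "(\<Sum>i \<in> {i. x i \<noteq> 0}. unitv p i * x i) \<le> 1" .
  qed
next
  have "(\<Sum>i \<in> {i. unitv p i \<noteq> 0}. unitv p i * unitv p i) = 1"
  proof -
    have "{i. unitv p i \<noteq> 0} = {p}" by (auto simp: unitv_def)
    then show ?thesis by (simp add: unitv_def)
  qed
  then show "1 \<le> tstar_norm (unitv p)"
    using tstar_lower[OF c00_unitv[of p] c00_unitv[of p] tsi_norm_unitv[of p]] by simp
qed

lemma tstar_pos:
  assumes "c00 b" "\<And>i. 0 \<le> b i" "0 < b p"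
  shows "0 < tstar_norm b"
proof -
  have "tstar_norm (\<lambda>i. b p * unitv p i) \<le> tstar_norm b"
    by (rule tstar_mono) (use assms in \<open>auto simp: unitv_def\<close>)
  moreover have "tstar_norm (\<lambda>i. b p * unitv p i) = b p"
    using tstar_scale[of "b p" "unitv p"] assms(3) c00_unitv tstar_unit by simp
  ultimately show ?thesis using assms(3) by linarith
qed



lemma fun_sum_apply: "(\<Sum>j\<in>T. f j) i = (\<Sum>j\<in>T. f j i)"
  for f :: "'b \<Rightarrow> nat \<Rightarrow> 'a::real_vector"
proof (cases "finite T")
  case True then show ?thesis by (induction T rule: finite_induct) auto
next
  case False then show ?thesis by simp
qed

lemma scaleR_fun_apply: "(c *\<^sub>R f) i = c *\<^sub>R f i"
  by (simp add: scaleR_fun_def)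

definition inj_at :: "nat \<Rightarrow> 'a::real_vector \<Rightarrow> nat \<Rightarrow> 'a" where
  "inj_at k u = (\<lambda>i. if i = k then u else 0)"

lemma inj_at_sum: "inj_at k (\<Sum>b\<in>B. c b *\<^sub>R b) = (\<Sum>b\<in>B. c b *\<^sub>R inj_at k b)"
  by (rule ext) (simp add: inj_at_def fun_sum_apply scaleR_fun_apply)

lemma inj_at_scale: "inj_at k (c *\<^sub>R u) = c *\<^sub>R inj_at k u"
  by (rule ext) (simp add: inj_at_def scaleR_fun_apply)

lemma LA:
  fixes Y :: "'a::real_vector set" and W :: "(nat \<Rightarrow> 'a) set"
  assumes Y: "subspace Y" "infinite_dimensional Y" and W: "subspace W" and F: "finite F"
    and cov: "\<And>u. u \<in> Y \<Longrightarrow> \<exists>w f. inj_at k u = w + f \<and> w \<in> W \<and> f \<in> span F"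
  shows "\<exists>u\<in>Y. u \<noteq> 0 \<and> inj_at k u \<in> W"
proof (rule ccontr)
  assume H0: "\<not> ?thesis"
  have H: "u = 0" if "u \<in> Y" "inj_at k u \<in> W" for u using H0 that by blast
  obtain Bm where Bm: "Bm \<subseteq> Y" "independent Bm" "Y \<subseteq> span Bm"
    by (rule maximal_independent_subset)
  have "infinite Bm" using Y(2) Bm unfolding infinite_dimensional_def by blast
  then obtain B where B: "finite B" "card B = Suc (card F)" "B \<subseteq> Bm"
    using infinite_arbitrarily_large by blast
  have Bi: "independent B" using independent_mono[OF Bm(2) B(3)] .
  have BY: "B \<subseteq> Y" using B(3) Bm(1) by blast
  have "\<forall>b\<in>B. \<exists>wf. inj_at k b = fst wf + snd wf \<and> fst wf \<in> W \<and> snd wf \<in> span F"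
    using cov BY by fastforce
  then obtain wf where wf: "\<And>b. b \<in> B \<Longrightarrow> inj_at k b = fst (wf b) + snd (wf b) \<and> fst (wf b) \<in> W \<and> snd (wf b) \<in> span F"
    by metis
  define fb where "fb b = snd (wf b)" for b
  define wb where "wb b = fst (wf b)" for b
  have key: "\<forall>b\<in>B. c b = 0" if c: "(\<Sum>b\<in>B. c b *\<^sub>R fb b) = 0" for c
  proof -
    have "(\<Sum>b\<in>B. c b *\<^sub>R inj_at k b) = (\<Sum>b\<in>B. c b *\<^sub>R wb b) + (\<Sum>b\<in>B. c b *\<^sub>R fb b)"
      unfolding sum.distrib[symmetric] scaleR_add_right[symmetric]
      by (rule sum.cong) (use wf in \<open>auto simp: wb_def fb_def\<close>)
    also have "\<dots> = (\<Sum>b\<in>B. c b *\<^sub>R wb b)" using c by simp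
    finally have "inj_at k (\<Sum>b\<in>B. c b *\<^sub>R b) \<in> W"
      unfolding inj_at_sum using wf W by (auto intro!: subspace_sum subspace_scale simp: wb_def)
    moreover have "(\<Sum>b\<in>B. c b *\<^sub>R b) \<in> Y" using BY Y(1) by (auto intro!: subspace_sum subspace_scale)
    ultimately have "(\<Sum>b\<in>B. c b *\<^sub>R b) = 0" using H by blast
    then show ?thesis using Bi B(1) dependent_finite by blast
  qed
  have inj: "inj_on fb B"
  proof (rule inj_onI, rule ccontr)
    fix b1 b2 assume b: "b1 \<in> B" "b2 \<in> B" "fb b1 = fb b2" "b1 \<noteq> b2"
    define c where "c b = (if b = b1 then 1 else if b = b2 then -1 else (0::real))" for b
    have "(\<Sum>b\<in>B. c b *\<^sub>R fb b) = (\<Sum>b\<in>B. (if b = b1 then fb b1 else 0) - (if b = b2 then fb b2 else 0))"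
      by (rule sum.cong) (use b in \<open>auto simp: c_def\<close>)
    also have "\<dots> = fb b1 - fb b2" using b B(1) by (simp add: sum_subtractf)
    also have "\<dots> = 0" using b by simp
    finally have "\<forall>b\<in>B. c b = 0" by (rule key)
    then have "c b1 = 0" using b(1) by blast
    then show False by (simp add: c_def)
  qed
  have ind: "independent (fb ` B)"
  proof
    assume "dependent (fb ` B)"
    then obtain u where u: "\<exists>v\<in>fb ` B. u v \<noteq> 0" "(\<Sum>v\<in>fb ` B. u v *\<^sub>R v) = 0"
      using dependent_finite[of "fb ` B"] B(1) by auto
    have "(\<Sum>b\<in>B. u (fb b) *\<^sub>R fb b) = 0" using u(2) sum.reindex[OF inj, of "\<lambda>v. u v *\<^sub>R v"] by simp
    then have "\<forall>b\<in>B. u (fb b) = 0" by (rule key)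
    then show False using u(1) by auto
  qed
  have "fb ` B \<subseteq> span F" using wf by (auto simp: fb_def)
  then have "card (fb ` B) \<le> card F" using independent_span_bound[OF F ind] by blast
  moreover have "card (fb ` B) = card B" by (rule card_image[OF inj])
  ultimately show False using B(2) by simp
qed



definition vec :: "(nat \<Rightarrow> nat) \<Rightarrow> nat \<Rightarrow> (nat \<Rightarrow> real) \<Rightarrow> nat \<Rightarrow> real" where
  "vec kk n a = (\<lambda>i. \<Sum>j<n. if i = kk j then \<bar>a j\<bar> else 0)"

definition Efun :: "(nat \<Rightarrow> nat) \<Rightarrow> nat \<Rightarrow> (nat \<Rightarrow> real) \<Rightarrow> real" where
  "Efun kk n a = tstar_norm (vec kk n a)"

lemma vec_at:
  assumes "strict_mono kk" "j < n"
  shows "vec kk n a (kk j) = \<bar>a j\<bar>"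
proof -
  have "vec kk n a (kk j) = (\<Sum>j'<n. if j' = j then \<bar>a j'\<bar> else 0)"
    unfolding vec_def by (rule sum.cong) (use strict_mono_eq[OF assms(1)] in auto)
  also have "\<dots> = \<bar>a j\<bar>" using assms(2) by simp
  finally show ?thesis .
qed

lemma vec_out: "i \<notin> kk ` {..<n} \<Longrightarrow> vec kk n a i = 0"
  unfolding vec_def by (rule sum.neutral) auto

lemma vec_nonneg: "0 \<le> vec kk n a i"
  unfolding vec_def by (simp add: sum_nonneg)

lemma c00_vec: "c00 (vec kk n a)"
proof -
  have "{i. vec kk n a i \<noteq> 0} \<subseteq> kk ` {..<n}" using vec_out by blast
  then show ?thesis unfolding c00_def by (rule finite_subset) simp
qed

lemma nm_Efun:
  assumes kk: "strict_mono kk"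
  shows "nm_norm n (Efun kk n)"
  unfolding nm_norm_def
proof (intro conjI allI impI)
  fix a
  show "Efun kk n a = Efun kk n (\<lambda>i. if i < n then a i else 0)"
    unfolding Efun_def vec_def by (rule arg_cong[of _ _ tstar_norm], rule ext, rule sum.cong) auto
next
  fix a
  show "(Efun kk n a = 0) = (\<forall>i<n. a i = 0)"
  proof
    assume E0: "Efun kk n a = 0"
    show "\<forall>i<n. a i = 0"
    proof (intro allI impI, rule ccontr)
      fix i assume i: "i < n" "a i \<noteq> 0"
      have "0 < tstar_norm (vec kk n a)"
        by (rule tstar_pos[OF c00_vec vec_nonneg, of _ _ _ "kk i"]) (use vec_at[OF kk i(1)] i(2) in simp)
      then show False using E0 unfolding Efun_def by simp
    qed
  next
    assume "\<forall>i<n. a i = 0"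
    then have "vec kk n a = (\<lambda>i. 0)" unfolding vec_def by (auto intro!: ext sum.neutral)
    then show "Efun kk n a = 0" unfolding Efun_def by (simp add: tstar_zero)
  qed
next
  fix a b
  have "Efun kk n (\<lambda>i. a i + b i) \<le> tstar_norm (\<lambda>i. vec kk n a i + vec kk n b i)"
    unfolding Efun_def
  proof (rule tstar_mono)
    show "c00 (\<lambda>i. vec kk n a i + vec kk n b i)" by (intro c00_add c00_vec)
    fix i
    show "0 \<le> vec kk n (\<lambda>i. a i + b i) i" by (rule vec_nonneg)
    show "vec kk n (\<lambda>i. a i + b i) i \<le> vec kk n a i + vec kk n b i"
      unfolding vec_def sum.distrib[symmetric] by (rule sum_mono) auto
  qed
  also have "\<dots> \<le> Efun kk n a + Efun kk n b" unfolding Efun_def by (intro tstar_add c00_vec)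
  finally show "Efun kk n (\<lambda>i. a i + b i) \<le> Efun kk n a + Efun kk n b" .
next
  fix c a
  have "vec kk n (\<lambda>i. c * a i) = (\<lambda>i. \<bar>c\<bar> * vec kk n a i)"
    unfolding vec_def by (auto intro!: ext simp: sum_distrib_left abs_mult intro: sum.cong)
  then show "Efun kk n (\<lambda>i. c * a i) = \<bar>c\<bar> * Efun kk n a"
    unfolding Efun_def by (simp add: tstar_scale c00_vec)
next
  fix i assume i: "i < n"
  have "vec kk n (\<lambda>j. if j = i then 1 else 0) = unitv (kk i)"
  proof
    fix x
    have "vec kk n (\<lambda>j. if j = i then 1 else 0) x = (\<Sum>j<n. if j = i then (if x = kk i then 1 else 0) else 0)"
      unfolding vec_def by (rule sum.cong) auto
    also have "\<dots> = unitv (kk i) x" using i by (simp add: unitv_def)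
    finally show "vec kk n (\<lambda>j. if j = i then 1 else 0) x = unitv (kk i) x" .
  qed
  then show "Efun kk n (\<lambda>j. if j = i then 1 else 0) = 1" unfolding Efun_def by (simp add: tstar_unit)
next
  fix a m assume "m \<le> n"
  show "Efun kk n (\<lambda>i. if i < m then a i else 0) \<le> Efun kk n a"
    unfolding Efun_def
  proof (rule tstar_mono[OF c00_vec])
    fix i
    show "0 \<le> vec kk n (\<lambda>i. if i < m then a i else 0) i" by (rule vec_nonneg)
    show "vec kk n (\<lambda>i. if i < m then a i else 0) i \<le> vec kk n a i"
      unfolding vec_def by (rule sum_mono) auto
  qed
qed



lemma inV:
  fixes X :: "nat \<Rightarrow> 'a::real_normed_vector set"
  assumes "\<And>k. subspace (X k)" "u \<in> X k"
  shows "inj_at k u \<in> tstar_sum X"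
  unfolding tstar_sum_def
proof (intro CollectI conjI allI)
  fix i show "inj_at k u i \<in> X i" using assms by (auto simp: inj_at_def subspace_0)
next
  show "tstar_convergent (\<lambda>i. norm (inj_at k u i))"
    unfolding tstar_convergent_def
  proof (intro allI impI exI[of _ "Suc k"])
    fix e :: real and m n assume "0 < e" "Suc k \<le> m"
    then have "(\<lambda>i. if m \<le> i \<and> i < n then norm (inj_at k u i) else 0) = (\<lambda>i. 0)"
      by (auto simp: inj_at_def)
    then show "tstar_norm (\<lambda>i. if m \<le> i \<and> i < n then norm (inj_at k u i) else 0) < e"
      using \<open>0 < e\<close> by (simp add: tstar_zero)
  qed
qed

lemma N_inj_at: "norm u = 1 \<Longrightarrow> tstar_sum_norm (inj_at k u) = 1"
proof -
  assume "norm u = 1"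
  then have "(\<lambda>i. norm (inj_at k u i)) = unitv k" by (auto simp: inj_at_def unitv_def)
  then show ?thesis unfolding tstar_sum_norm_def by (simp add: tstar_unit)
qed

lemma N_combo:
  assumes kk: "strict_mono kk" and us: "\<And>j. j < n \<Longrightarrow> norm (us j) = 1"
  shows "tstar_sum_norm (\<Sum>j<n. a j *\<^sub>R inj_at (kk j) (us j)) = Efun kk n a"
proof -
  have "(\<lambda>i. norm ((\<Sum>j<n. a j *\<^sub>R inj_at (kk j) (us j)) i)) = vec kk n a"
  proof
    fix i
    have e: "(\<Sum>j<n. a j *\<^sub>R inj_at (kk j) (us j)) i = (\<Sum>j<n. if i = kk j then a j *\<^sub>R us j else 0)"
      by (simp add: fun_sum_apply scaleR_fun_apply inj_at_def if_distrib cong: if_cong)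
    show "norm ((\<Sum>j<n. a j *\<^sub>R inj_at (kk j) (us j)) i) = vec kk n a i"
    proof (cases "i \<in> kk ` {..<n}")
      case True
      then obtain j0 where j0: "j0 < n" "i = kk j0" by auto
      have "(\<Sum>j<n. if i = kk j then a j *\<^sub>R us j else 0) = (\<Sum>j<n. if j = j0 then a j *\<^sub>R us j else 0)"
        by (rule sum.cong) (use j0 strict_mono_eq[OF kk] in auto)
      also have "\<dots> = a j0 *\<^sub>R us j0" using j0 by simp
      finally show ?thesis unfolding e using vec_at[OF kk j0(1), of a] j0 us[OF j0(1)] by simp
    next
      case False
      then have "(\<Sum>j<n. if i = kk j then a j *\<^sub>R us j else 0) = 0" by (intro sum.neutral) auto
      then show ?thesis unfolding e using vec_out[OF False] by simp
    qed
  qed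
  then show ?thesis unfolding tstar_sum_norm_def Efun_def by simp
qed

lemma game:
  fixes X :: "nat \<Rightarrow> 'a::real_normed_vector set"
  assumes X: "\<And>k. subspace (X k)" and kk: "strict_mono kk" and inf: "\<And>j. infinite_dimensional (X (kk j))"
    and eps: "\<epsilon> > 0"
  shows "l + r = n \<Longrightarrow> (\<And>j. j < l \<Longrightarrow> us j \<in> X (kk j) \<and> norm (us j) = 1) \<Longrightarrow>
    asym_game (tstar_sum X) tstar_sum_norm (Efun kk n) \<epsilon> r (map (\<lambda>j. inj_at (kk j) (us j)) [0..<l])"
proof (induction r arbitrary: l us)
  case 0
  then have ln: "l = n" by simp
  show ?case
    unfolding asym_game.simps equiv_to_basis_def
  proof (intro exI[of _ 1] conjI allI)
    fix a
    have "(\<Sum>j<length (map (\<lambda>j. inj_at (kk j) (us j)) [0..<l]). a j *\<^sub>R map (\<lambda>j. inj_at (kk j) (us j)) [0..<l] ! j)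
        = (\<Sum>j<n. a j *\<^sub>R inj_at (kk j) (us j))"
      using ln by (intro sum.cong) auto
    moreover have "tstar_sum_norm (\<Sum>j<n. a j *\<^sub>R inj_at (kk j) (us j)) = Efun kk n a"
      by (rule N_combo[OF kk]) (use 0 ln in auto)
    ultimately show "1 / 1 * tstar_sum_norm (\<Sum>j<length (map (\<lambda>j. inj_at (kk j) (us j)) [0..<l]). a j *\<^sub>R map (\<lambda>j. inj_at (kk j) (us j)) [0..<l] ! j) \<le> Efun kk n a"
      "Efun kk n a \<le> 1 * tstar_sum_norm (\<Sum>j<length (map (\<lambda>j. inj_at (kk j) (us j)) [0..<l]). a j *\<^sub>R map (\<lambda>j. inj_at (kk j) (us j)) [0..<l] ! j)"
      by simp_all
  qed (use eps in simp_all)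
next
  case (Suc r)
  show ?case
    unfolding asym_game.simps
  proof (intro allI impI)
    fix W assume W: "fin_codim_closed (tstar_sum X) tstar_sum_norm W"
    then have Ws: "subspace W" unfolding fin_codim_closed_def by blast
    obtain F where F: "finite F" "F \<subseteq> tstar_sum X" "tstar_sum X \<subseteq> {w + f | w f. w \<in> W \<and> f \<in> span F}"
      using W unfolding fin_codim_closed_def by blast
    have cov: "\<exists>w f. inj_at (kk l) u = w + f \<and> w \<in> W \<and> f \<in> span F" if "u \<in> X (kk l)" for u
      using F(3) inV[of X, OF X that] by blast
    obtain u0 where u0: "u0 \<in> X (kk l)" "u0 \<noteq> 0" "inj_at (kk l) u0 \<in> W"
      using LA[OF X inf Ws F(1) cov] by blast
    define u where "u = (1 / norm u0) *\<^sub>R u0"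
    have uX: "u \<in> X (kk l)" unfolding u_def using X u0(1) by (simp add: subspace_scale)
    have un: "norm u = 1" unfolding u_def using u0(2) by simp
    have uW: "inj_at (kk l) u \<in> W" unfolding u_def inj_at_scale using Ws u0(3) by (simp add: subspace_scale)
    define us' where "us' = us(l := u)"
    have m: "map (\<lambda>j. inj_at (kk j) (us j)) [0..<l] @ [inj_at (kk l) u] = map (\<lambda>j. inj_at (kk j) (us' j)) [0..<Suc l]"
      by (simp add: us'_def)
    have "asym_game (tstar_sum X) tstar_sum_norm (Efun kk n) \<epsilon> r (map (\<lambda>j. inj_at (kk j) (us' j)) [0..<Suc l])"
      by (rule Suc.IH) (use Suc.prems uX un in \<open>auto simp: us'_def\<close>)
    then show "\<exists>x\<in>W. tstar_sum_norm x = 1 \<and> asym_game (tstar_sum X) tstar_sum_norm (Efun kk n) \<epsilon> r (map (\<lambda>j. inj_at (kk j) (us j)) [0..<l] @ [x])"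
      using uW N_inj_at[OF un] m by metis
  qed
qed

theorem lemma2p7:
  fixes X :: "nat \<Rightarrow> 'a::banach set"
  assumes "\<And>k. subspace (X k)"
    and "\<And>k. closed (X k)"
    and "infinite {k. infinite_dimensional (X k)}"
  shows "\<not> asymptotic_c0 (tstar_sum X) tstar_sum_norm"
proof
  define K where "K = {k. infinite_dimensional (X k)}"
  have K: "infinite K" using assms(3) unfolding K_def .
  define kk where "kk = enumerate K"
  have kkm: "strict_mono kk" unfolding kk_def by (rule strict_mono_enumerate[OF K])
  have kkr: "range kk = K" unfolding kk_def by (rule range_enumerate[OF K])
  have kkinf: "infinite_dimensional (X (kk j))" for j using kkr unfolding K_def by blast
  assume "asymptotic_c0 (tstar_sum X) tstar_sum_norm"
  then obtain c where H: "\<And>k E. E \<in> asym_struct (tstar_sum X) tstar_sum_norm k \<Longrightarrow>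
        (\<exists>A B. A > 0 \<and> B > 0 \<and> A * B \<le> c \<and>
           (\<forall>a. (1/A) * E a \<le> linf_norm k a \<and> linf_norm k a \<le> B * E a))"
    unfolding asymptotic_c0_def by blast
  obtain y where y: "\<forall>i. 0 \<le> y i" "c00 y" "supp y \<subseteq> K" "\<forall>m. tsi_iter m y \<le> 1" "c < l1 y"
    using core[OF K] by blast
  have fy: "finite (supp y)" using y(2) by (simp add: c00_supp)
  define n where "n = Suc (Max (insert 0 (supp y)))"
  have n1: "1 \<le> n" unfolding n_def by simp
  have sy: "supp y \<subseteq> kk ` {..<n}"
  proof
    fix i assume i: "i \<in> supp y"
    then obtain j where j: "i = kk j" using y(3) kkr by blast
    have "j \<le> kk j" by (rule strict_mono_imp_increasing[OF kkm])
    moreover have "i \<le> Max (insert 0 (supp y))" using i fy by simp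
    ultimately show "i \<in> kk ` {..<n}" unfolding n_def using j by auto
  qed
  have "Efun kk n \<in> asym_struct (tstar_sum X) tstar_sum_norm n"
    unfolding asym_struct_def
  proof (intro CollectI conjI allI impI)
    show "nm_norm n (Efun kk n)" by (rule nm_Efun[OF kkm])
    fix \<epsilon> :: real assume "\<epsilon> > 0"
    from game[where X=X and kk=kk and \<epsilon>=\<epsilon> and l=0 and r=n and n=n and us="\<lambda>_. 0", OF assms(1) kkm kkinf this]
    show "asym_game (tstar_sum X) tstar_sum_norm (Efun kk n) \<epsilon> n []" by simp
  qed
  then obtain A B where AB: "A > 0" "B > 0" "A * B \<le> c"
    "\<And>a. (1/A) * Efun kk n a \<le> linf_norm n a" "\<And>a. linf_norm n a \<le> B * Efun kk n a"
    using H by blast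
  have lin1: "linf_norm n (\<lambda>_. 1) = 1"
    unfolding linf_norm_def by (rule Max_eqI) (use n1 in \<open>auto intro!: image_eqI[where x=0]\<close>)
  have lin2: "linf_norm n (\<lambda>j. if j = 0 then 1 else 0) = 1"
    unfolding linf_norm_def by (rule Max_eqI) (use n1 in \<open>auto intro!: image_eqI[where x=0]\<close>)
  have E2: "Efun kk n (\<lambda>j. if j = 0 then 1 else 0) = 1"
    using nm_Efun[OF kkm, of n] n1 unfolding nm_norm_def by auto
  have B1: "1 \<le> B" using AB(5)[of "\<lambda>j. if j = 0 then 1 else 0"] lin2 E2 by simp
  have "l1 y \<le> Efun kk n (\<lambda>_. 1)"
  proof -
    have tn: "tsi_norm y \<le> 1" by (rule tsi_norm_le) (use y(4) in blast)
    have "l1 y = (\<Sum>i\<in>{i. y i \<noteq> 0}. vec kk n (\<lambda>_. 1) i * y i)"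
      unfolding l1_def supp_def
    proof (rule sum.cong)
      fix i assume "i \<in> {i. y i \<noteq> 0}"
      then obtain j where "j < n" "i = kk j" using sy unfolding supp_def by blast
      then have "vec kk n (\<lambda>_. 1) i = 1" using vec_at[OF kkm] by simp
      then show "\<bar>y i\<bar> = vec kk n (\<lambda>_. 1) i * y i" using y(1) by simp
    qed simp
    also have "\<dots> \<le> Efun kk n (\<lambda>_. 1)" unfolding Efun_def by (rule tstar_lower[OF c00_vec y(2) tn])
    finally show ?thesis .
  qed
  moreover have "Efun kk n (\<lambda>_. 1) \<le> A"
    using AB(4)[of "\<lambda>_. 1"] lin1 AB(1) by (simp add: field_simps)
  moreover have "A \<le> A * B" using B1 AB(1) by simp
  ultimately show False using AB(3) y(5) by linarith
qed

end
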